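(* Let $\mathcal{D}$ be a small category, $X:\mathcal{D}\to\mathbf{Set}_*$ a diagram of pointed sets, $A$ an abelian group and $\rho:(\lim_\mathcal{D}X)\wedge A\to\lim_\mathcal{D}(X\wedge A)$ the natural map. Then: (1) If $A$ is $m$-bounded ($mA=0$) then $\ker\rho$ and $\mathrm{coker}\,\rho$ are $m$-bounded. (2) If $A$ is uniquely divisible then $\ker\rho$ and $\mathrm{coker}\,\rho$ are uniquely divisible. (3) If $A$ is almost uniquely divisible then $\ker\rho$ and $\mathrm{coker}\,\rho$ are almost uniquely divisible (in particular cotorsion).
   Context: For a pointed set $Y$ (base point $*$) and abelian group $A$, $Y\wedge A:=\bigoplus_{Y\setminus\{*\}}A$; its elements are pointed maps $y:Y\to A$ with finite support. For $s\in Y$, $v\in A$, $sv$ denotes the element with value $v$ at $s$ and $0$ elsewhere ($*v=0$). A pointed map $f:Y\to Z$ induces $f_*:Y\wedge A\to Z\wedge A$, $f_*(sv)=f(s)v$. The natural map $\rho$ satisfies $\rho(xv)(d)=x(d)v$ for $x\in\lim_\mathcal{D}X$, $v\in A$, $d\in\mathcal{D}$. An abelian group is almost uniquely divisible if it is the direct sum of a uniquely divisible group and a bounded group. A group $C$ is cotorsion if $\mathrm{Ext}(\mathbb{Q},C)=0$. *)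

theory Defs
  imports Main "HOL-Library.Function_Algebras"
begin

text \<open>A small category: objects form the type 'd, morphisms the type 'm, with
  domain, codomain, identities and (partial) composition; composition is only
  constrained on composable pairs.\<close>

definition is_category ::
  "('m \<Rightarrow> 'd) \<Rightarrow> ('m \<Rightarrow> 'd) \<Rightarrow> ('d \<Rightarrow> 'm) \<Rightarrow> ('m \<Rightarrow> 'm \<Rightarrow> 'm) \<Rightarrow> bool" where
  "is_category dm cd idm cmp \<longleftrightarrow>
     (\<forall>d. dm (idm d) = d \<and> cd (idm d) = d) \<and>
     (\<forall>f g. cd f = dm g \<longrightarrow> dm (cmp g f) = dm f \<and> cd (cmp g f) = cd g) \<and>
     (\<forall>f. cmp f (idm (dm f)) = f \<and> cmp (idm (cd f)) f = f) \<and>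
     (\<forall>f g h. cd f = dm g \<and> cd g = dm h \<longrightarrow> cmp h (cmp g f) = cmp (cmp h g) f)"

text \<open>A functor X into pointed sets: object d goes to the pointed set (Xob d, pt d),
  morphism f goes to the pointed map Xmor f : Xob (dm f) \<rightarrow> Xob (cd f).\<close>

definition is_pointed_diagram ::
  "('m \<Rightarrow> 'd) \<Rightarrow> ('m \<Rightarrow> 'd) \<Rightarrow> ('d \<Rightarrow> 'm) \<Rightarrow> ('m \<Rightarrow> 'm \<Rightarrow> 'm) \<Rightarrow>
   ('d \<Rightarrow> 'x set) \<Rightarrow> ('d \<Rightarrow> 'x) \<Rightarrow> ('m \<Rightarrow> 'x \<Rightarrow> 'x) \<Rightarrow> bool" where
  "is_pointed_diagram dm cd idm cmp Xob pt Xmor \<longleftrightarrow>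
     (\<forall>d. pt d \<in> Xob d) \<and>
     (\<forall>f. \<forall>y\<in>Xob (dm f). Xmor f y \<in> Xob (cd f)) \<and>
     (\<forall>f. Xmor f (pt (dm f)) = pt (cd f)) \<and>
     (\<forall>d. \<forall>y\<in>Xob d. Xmor (idm d) y = y) \<and>
     (\<forall>f g. cd f = dm g \<longrightarrow> (\<forall>y\<in>Xob (dm f). Xmor (cmp g f) y = Xmor g (Xmor f y)))"

text \<open>The limit of X in pointed sets (base point: the family pt).\<close>

definition limX ::
  "('m \<Rightarrow> 'd) \<Rightarrow> ('m \<Rightarrow> 'd) \<Rightarrow> ('d \<Rightarrow> 'x set) \<Rightarrow> ('m \<Rightarrow> 'x \<Rightarrow> 'x) \<Rightarrow> ('d \<Rightarrow> 'x) set" where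
  "limX dm cd Xob Xmor = {x. (\<forall>d. x d \<in> Xob d) \<and> (\<forall>f. Xmor f (x (dm f)) = x (cd f))}"

text \<open>Y \<and> A for a pointed set (Y, p): finitely supported maps Y \<rightarrow> A vanishing at the
  base point (represented as maps on the ambient type, zero outside Y).\<close>

definition smash :: "'x set \<Rightarrow> 'x \<Rightarrow> ('x \<Rightarrow> 'a::zero) set" where
  "smash Y p = {y. finite {s. y s \<noteq> 0} \<and> (\<forall>s. (s \<notin> Y \<or> s = p) \<longrightarrow> y s = 0)}"

text \<open>f_* : Y \<and> A \<rightarrow> Z \<and> A for a pointed map f with target base point q:
  f_*(s v) = f(s) v, extended additively.\<close>

definition push :: "('x \<Rightarrow> 'y) \<Rightarrow> 'y \<Rightarrow> ('x \<Rightarrow> 'a::comm_monoid_add) \<Rightarrow> 'y \<Rightarrow> 'a" where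
  "push f q y t = (if t = q then 0 else sum y {s. y s \<noteq> 0 \<and> f s = t})"

definition limXA ::
  "('m \<Rightarrow> 'd) \<Rightarrow> ('m \<Rightarrow> 'd) \<Rightarrow> ('d \<Rightarrow> 'x set) \<Rightarrow> ('d \<Rightarrow> 'x) \<Rightarrow> ('m \<Rightarrow> 'x \<Rightarrow> 'x)
   \<Rightarrow> ('d \<Rightarrow> 'x \<Rightarrow> 'a::comm_monoid_add) set" where
  "limXA dm cd Xob pt Xmor =
     {z. (\<forall>d. z d \<in> smash (Xob d) (pt d)) \<and>
         (\<forall>f. push (Xmor f) (pt (cd f)) (z (dm f)) = z (cd f))}"

text \<open>The natural map \<rho> : (lim X) \<and> A \<rightarrow> lim (X \<and> A), \<rho>(x v)(d) = x(d) v, i.e.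
  componentwise the pushforward along the evaluation maps.\<close>

definition rho :: "('d \<Rightarrow> 'x) \<Rightarrow> (('d \<Rightarrow> 'x) \<Rightarrow> 'a::comm_monoid_add) \<Rightarrow> 'd \<Rightarrow> 'x \<Rightarrow> 'a" where
  "rho pt w = (\<lambda>d. push (\<lambda>x. x d) (pt d) w)"

primrec natmult :: "nat \<Rightarrow> 'a::monoid_add \<Rightarrow> 'a" where
  "natmult 0 a = 0"
| "natmult (Suc n) a = a + natmult n a"

definition is_subgroup :: "'a::ab_group_add set \<Rightarrow> bool" where
  "is_subgroup S \<longleftrightarrow> 0 \<in> S \<and> (\<forall>a\<in>S. \<forall>b\<in>S. a + b \<in> S) \<and> (\<forall>a\<in>S. - a \<in> S)"

text \<open>The quotient group S/T (T \<subseteq> S subgroups of an ambient abelian group) is m-bounded.\<close>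
definition sq_bounded_by :: "nat \<Rightarrow> 'a::ab_group_add set \<Rightarrow> 'a set \<Rightarrow> bool" where
  "sq_bounded_by m S T \<longleftrightarrow> (\<forall>s\<in>S. natmult m s \<in> T)"

definition sq_bounded :: "'a::ab_group_add set \<Rightarrow> 'a set \<Rightarrow> bool" where
  "sq_bounded S T \<longleftrightarrow> (\<exists>m>0. sq_bounded_by m S T)"

text \<open>S/T is uniquely divisible: multiplication by every n > 0 is bijective on S/T.\<close>
definition sq_uniquely_divisible :: "'a::ab_group_add set \<Rightarrow> 'a set \<Rightarrow> bool" where
  "sq_uniquely_divisible S T \<longleftrightarrow>
     (\<forall>n>0. (\<forall>s\<in>S. \<exists>s'\<in>S. natmult n s' - s \<in> T) \<and>
            (\<forall>s'\<in>S. natmult n s' \<in> T \<longrightarrow> s' \<in> T))"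

definition sq_almost_uniquely_divisible :: "'a::ab_group_add set \<Rightarrow> 'a set \<Rightarrow> bool" where
  "sq_almost_uniquely_divisible S T \<longleftrightarrow>
     (\<exists>U B. is_subgroup U \<and> is_subgroup B \<and> T \<subseteq> U \<and> U \<subseteq> S \<and> T \<subseteq> B \<and> B \<subseteq> S \<and>
            U \<inter> B = T \<and> S = {u + b | u b. u \<in> U \<and> b \<in> B} \<and>
            sq_uniquely_divisible U T \<and> sq_bounded B T)"

text \<open>Kernel and cokernel of \<rho>, as subquotients of the ambient function groups.\<close>

definition smashL ::
  "('m \<Rightarrow> 'd) \<Rightarrow> ('m \<Rightarrow> 'd) \<Rightarrow> ('d \<Rightarrow> 'x set) \<Rightarrow> ('d \<Rightarrow> 'x) \<Rightarrow> ('m \<Rightarrow> 'x \<Rightarrow> 'x)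
   \<Rightarrow> (('d \<Rightarrow> 'x) \<Rightarrow> 'a::zero) set" where
  "smashL dm cd Xob pt Xmor = smash (limX dm cd Xob Xmor) pt"

definition ker_rho where
  "ker_rho dm cd Xob pt Xmor = {w \<in> smashL dm cd Xob pt Xmor. rho pt w = 0}"

definition im_rho where
  "im_rho dm cd Xob pt Xmor = rho pt ` smashL dm cd Xob pt Xmor"

end

theory Submission
  imports Defs
begin


definition addh :: "('a::ab_group_add \<Rightarrow> 'a) \<Rightarrow> bool" where
  "addh h \<longleftrightarrow> (\<forall>a b. h (a + b) = h a + h b)"

lemma addh_0: "addh h \<Longrightarrow> h 0 = 0"
  unfolding addh_def by (metis add_cancel_right_right add_0)

lemma addh_minus: "addh h \<Longrightarrow> h (- a) = - h a"
  by (metis addh_0 addh_def add.right_inverse eq_neg_iff_add_eq_0)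

lemma addh_diff: "addh h \<Longrightarrow> h (a - b) = h a - h b"
  by (metis addh_def addh_minus diff_conv_add_uminus)

lemma addh_sum: assumes "addh h" "finite S" shows "h (sum g S) = sum (\<lambda>s. h (g s)) S"
  using assms(2) by (induction S rule: finite_induct) (auto simp: addh_0[OF assms(1)] addh_def[THEN iffD1, OF assms(1)])

lemma natmult_add: "natmult n (a + b) = natmult n a + natmult n (b::'a::ab_group_add)"
  by (induction n) (simp_all add: algebra_simps)

lemma addh_natmult: "addh (natmult n :: 'a::ab_group_add \<Rightarrow> 'a)"
  by (simp add: addh_def natmult_add)

lemma natmult_fun: "natmult n (f :: 'b \<Rightarrow> 'a::ab_group_add) = (\<lambda>x. natmult n (f x))"
  by (induction n) (auto simp: fun_eq_iff)

lemma natmult_zero: "natmult n (0::'a::ab_group_add) = 0"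
  by (induction n) auto

lemma addh_comp: "addh g \<Longrightarrow> addh h \<Longrightarrow> addh (\<lambda>a. g (h a))"
  by (simp add: addh_def)

lemma push_supp:
  assumes "finite F" "{s. y s \<noteq> 0} \<subseteq> F"
  shows "push f q y t = (if t = q then 0 else sum y {s\<in>F. f s = t})"
  unfolding push_def using assms
  by (auto intro!: sum.mono_neutral_left)

lemma push_hom:
  assumes "finite {s. y s \<noteq> 0}" "addh h"
  shows "push f q (\<lambda>s. h (y s)) t = h (push f q y t)"
proof -
  have "{s. h (y s) \<noteq> 0} \<subseteq> {s. y s \<noteq> 0}" using addh_0[OF assms(2)] by auto
  then have "push f q (\<lambda>s. h (y s)) t = (if t = q then 0 else sum (\<lambda>s. h (y s)) {s\<in>{s. y s \<noteq> 0}. f s = t})"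
    by (rule push_supp[OF assms(1)])
  also have "\<dots> = h (push f q y t)"
    using push_supp[OF assms(1) order_refl, of f q t] addh_sum[OF assms(2), of "{s\<in>{s. y s \<noteq> 0}. f s = t}" y]
      addh_0[OF assms(2)] assms(1) by auto
  finally show ?thesis .
qed

lemma push_add:
  assumes "finite {s. y1 s \<noteq> 0}" "finite {s. y2 s \<noteq> 0}"
  shows "push f q (\<lambda>s. y1 s + y2 s) t = push f q y1 t + push f q y2 t"
proof -
  let ?F = "{s. y1 s \<noteq> 0} \<union> {s. y2 s \<noteq> 0}"
  have fF: "finite ?F" using assms by auto
  have e1: "push f q (\<lambda>s. y1 s + y2 s) t = (if t = q then 0 else sum (\<lambda>s. y1 s + y2 s) {s\<in>?F. f s = t})"
    by (rule push_supp[OF fF]) auto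
  have e2: "push f q y1 t = (if t = q then 0 else sum y1 {s\<in>?F. f s = t})"
    by (rule push_supp[OF fF]) auto
  have e3: "push f q y2 t = (if t = q then 0 else sum y2 {s\<in>?F. f s = t})"
    by (rule push_supp[OF fF]) auto
  show ?thesis unfolding e1 e2 e3 by (simp add: sum.distrib)
qed

lemma push_cong:
  assumes "\<And>s. y s \<noteq> 0 \<Longrightarrow> f s = g s"
  shows "push f q y = push g q y"
  unfolding push_def using assms by (intro ext) (auto intro!: sum.cong)

lemma push_push:
  assumes fin: "finite {s. y s \<noteq> 0}" and gq: "g q = r"
  shows "push g r (push f q y) t = push (\<lambda>s. g (f s)) r y t"
proof (cases "t = r")
  case True then show ?thesis by (simp add: push_def)
next
  case False
  let ?F = "{s. y s \<noteq> 0}"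
  have fF: "finite (f ` ?F)" using fin by auto
  have sub: "{u. push f q y u \<noteq> 0} \<subseteq> f ` ?F"
  proof
    fix u assume "u \<in> {u. push f q y u \<noteq> 0}"
    then have "sum y {s. y s \<noteq> 0 \<and> f s = u} \<noteq> 0" by (auto simp: push_def split: if_splits)
    then obtain s where "y s \<noteq> 0" "f s = u" by (metis (mono_tags, lifting) empty_Collect_eq sum.empty)
    then show "u \<in> f ` ?F" by auto
  qed
  have "push g r (push f q y) t = sum (push f q y) {u \<in> f ` ?F. g u = t}"
    using push_supp[OF fF sub, of g r t] False by simp
  also have "\<dots> = sum (\<lambda>u. sum y {s \<in> {s\<in>?F. g (f s) = t}. f s = u}) {u \<in> f ` ?F. g u = t}"
  proof (rule sum.cong)
    fix u assume u: "u \<in> {u \<in> f ` ?F. g u = t}"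
    then have "u \<noteq> q" using gq False by auto
    then show "push f q y u = sum y {s \<in> {s\<in>?F. g (f s) = t}. f s = u}"
      using push_supp[OF fin order_refl, of f q u] u by (auto intro!: sum.cong)
  qed simp
  also have "\<dots> = sum y {s\<in>?F. g (f s) = t}"
    by (rule sum.group) (use fin fF in auto)
  also have "\<dots> = push (\<lambda>s. g (f s)) r y t"
    using push_supp[OF fin order_refl, of "\<lambda>s. g (f s)" r t] False by simp
  finally show ?thesis .
qed

lemma smash_hom: "y \<in> smash Y p \<Longrightarrow> addh h \<Longrightarrow> (\<lambda>s. h (y s)) \<in> smash Y p"
  unfolding smash_def
  by (auto simp: addh_0 elim!: rev_finite_subset)

lemma smash_add: "(y1::'x\<Rightarrow>'a::comm_monoid_add) \<in> smash Y p \<Longrightarrow> y2 \<in> smash Y p \<Longrightarrow> (\<lambda>s. y1 s + y2 s) \<in> smash Y p"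
proof -
  assume a: "y1 \<in> smash Y p" "y2 \<in> smash Y p"
  have "{s. y1 s + y2 s \<noteq> 0} \<subseteq> {s. y1 s \<noteq> 0} \<union> {s. y2 s \<noteq> 0}" by auto
  moreover have "finite ({s. y1 s \<noteq> 0} \<union> {s. y2 s \<noteq> 0})" using a by (simp add: smash_def)
  ultimately have "finite {s. y1 s + y2 s \<noteq> 0}" by (rule finite_subset)
  then show ?thesis using a unfolding smash_def by auto
qed

lemma smash_fin: "y \<in> smash Y p \<Longrightarrow> finite {s. y s \<noteq> 0}"
  by (simp add: smash_def)

lemma rho_apply: "rho pt w d x = push (\<lambda>x. x d) (pt d) w x"
  by (simp add: rho_def)

lemma rho_hom: "finite {s. w s \<noteq> 0} \<Longrightarrow> addh h \<Longrightarrow> rho pt (\<lambda>s. h (w s)) = (\<lambda>d x. h (rho pt w d x))"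
  by (simp add: rho_def fun_eq_iff push_hom)

lemma rho_add: "finite {s. w1 s \<noteq> 0} \<Longrightarrow> finite {s. w2 s \<noteq> 0} \<Longrightarrow>
   rho pt (\<lambda>s. w1 s + w2 s) = (\<lambda>d x. rho pt w1 d x + rho pt w2 d x)"
  by (simp add: rho_def fun_eq_iff push_add)

locale setting =
  fixes dm cd :: "'m \<Rightarrow> 'd" and idm :: "'d \<Rightarrow> 'm" and cmp :: "'m \<Rightarrow> 'm \<Rightarrow> 'm"
    and Xob :: "'d \<Rightarrow> 'x set" and pt :: "'d \<Rightarrow> 'x" and Xmor :: "'m \<Rightarrow> 'x \<Rightarrow> 'x"
  assumes diag: "is_pointed_diagram dm cd idm cmp Xob pt Xmor"
begin

lemma Xmor_pt: "Xmor f (pt (dm f)) = pt (cd f)"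
  using diag by (simp add: is_pointed_diagram_def)

lemma limXA_hom: assumes "z \<in> limXA dm cd Xob pt Xmor" "addh h" shows "(\<lambda>d x. h (z d x)) \<in> limXA dm cd Xob pt Xmor"
proof -
  have a: "z d \<in> smash (Xob d) (pt d)" "push (Xmor f) (pt (cd f)) (z (dm f)) = z (cd f)" for d f
    using assms(1) by (auto simp: limXA_def)
  have "push (Xmor f) (pt (cd f)) (\<lambda>x. h (z (dm f) x)) = (\<lambda>x. h (z (cd f) x))" for f
  proof
    fix t show "push (Xmor f) (pt (cd f)) (\<lambda>x. h (z (dm f) x)) t = h (z (cd f) t)"
      using push_hom[OF smash_fin[OF a(1)] assms(2)] a(2) by metis
  qed
  then show ?thesis using smash_hom[OF a(1) assms(2)] by (auto simp: limXA_def)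
qed

lemma limXA_add: assumes "z1 \<in> limXA dm cd Xob pt Xmor" "z2 \<in> limXA dm cd Xob pt Xmor" shows
   "(\<lambda>d x. z1 d x + z2 d x) \<in> limXA dm cd Xob pt Xmor"
proof -
  have a: "z1 d \<in> smash (Xob d) (pt d)" "push (Xmor f) (pt (cd f)) (z1 (dm f)) = z1 (cd f)"
    "z2 d \<in> smash (Xob d) (pt d)" "push (Xmor f) (pt (cd f)) (z2 (dm f)) = z2 (cd f)" for d f
    using assms by (auto simp: limXA_def)
  have "push (Xmor f) (pt (cd f)) (\<lambda>x. z1 (dm f) x + z2 (dm f) x) = (\<lambda>x. z1 (cd f) x + z2 (cd f) x)" for f
  proof
    fix t show "push (Xmor f) (pt (cd f)) (\<lambda>x. z1 (dm f) x + z2 (dm f) x) t = z1 (cd f) t + z2 (cd f) t"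
      using push_add[OF smash_fin[OF a(1)] smash_fin[OF a(3)]] a(2,4) by metis
  qed
  then show ?thesis using smash_add[OF a(1) a(3)] by (auto simp: limXA_def)
qed

lemma rho_in: 
  assumes w: "w \<in> smashL dm cd Xob pt Xmor"
  shows "rho pt w \<in> limXA dm cd Xob pt Xmor"
proof -
  have fin: "finite {s. w s \<noteq> 0}" using w by (simp add: smashL_def smash_def)
  have inL: "w s \<noteq> 0 \<Longrightarrow> s \<in> limX dm cd Xob Xmor" for s
    using w by (auto simp: smashL_def smash_def)
  have "rho pt w d \<in> smash (Xob d) (pt d)" for d
  proof -
    have "{x. rho pt w d x \<noteq> 0} \<subseteq> (\<lambda>s. s d) ` {s. w s \<noteq> 0}"
    proof
      fix x assume "x \<in> {x. rho pt w d x \<noteq> 0}"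
      then have "sum w {s. w s \<noteq> 0 \<and> s d = x} \<noteq> 0" by (auto simp: rho_def push_def split: if_splits)
      then obtain s where "w s \<noteq> 0" "s d = x" by (metis (mono_tags, lifting) empty_Collect_eq sum.empty)
      then show "x \<in> (\<lambda>s. s d) ` {s. w s \<noteq> 0}" by auto
    qed
    moreover have "rho pt w d x = 0" if "x \<notin> Xob d" for x
    proof -
      have "{s. w s \<noteq> 0 \<and> s d = x} = {}" using inL that by (auto simp: limX_def)
      then show ?thesis by (simp only: rho_def push_def sum.empty if_cancel)
    qed
    moreover have "rho pt w d (pt d) = 0" by (simp add: rho_def push_def)
    ultimately show ?thesis using fin unfolding smash_def by (auto intro: finite_subset)
  qed
  moreover have "push (Xmor f) (pt (cd f)) (rho pt w (dm f)) = rho pt w (cd f)" for f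
  proof
    fix t
    have "push (Xmor f) (pt (cd f)) (rho pt w (dm f)) t = push (\<lambda>s. Xmor f (s (dm f))) (pt (cd f)) w t"
      unfolding rho_def by (rule push_push[OF fin]) (rule Xmor_pt)
    also have "\<dots> = rho pt w (cd f) t"
    proof -
      have "push (\<lambda>s. Xmor f (s (dm f))) (pt (cd f)) w = push (\<lambda>s. s (cd f)) (pt (cd f)) w"
      proof (rule push_cong)
        fix s assume "w s \<noteq> 0"
        then have "s \<in> limX dm cd Xob Xmor" by (rule inL)
        then show "Xmor f (s (dm f)) = s (cd f)" unfolding limX_def by blast
      qed
      then show ?thesis by (simp add: rho_def)
    qed
    finally show "push (Xmor f) (pt (cd f)) (rho pt w (dm f)) t = rho pt w (cd f) t" .
  qed
  ultimately show ?thesis by (simp add: limXA_def)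
qed

lemma ker_hom: "w \<in> ker_rho dm cd Xob pt Xmor \<Longrightarrow> addh h \<Longrightarrow> (\<lambda>s. h (w s)) \<in> ker_rho dm cd Xob pt Xmor"
  unfolding ker_rho_def smashL_def
  by (auto simp: smash_hom rho_hom smash_fin addh_0 zero_fun_def)

lemma ker_add: "w1 \<in> ker_rho dm cd Xob pt Xmor \<Longrightarrow> w2 \<in> ker_rho dm cd Xob pt Xmor \<Longrightarrow>
   (\<lambda>s. w1 s + w2 s) \<in> ker_rho dm cd Xob pt Xmor"
  unfolding ker_rho_def smashL_def
  by (auto simp: smash_add rho_add smash_fin zero_fun_def)

lemma im_hom: assumes "z \<in> im_rho dm cd Xob pt Xmor" "addh h" shows "(\<lambda>d x. h (z d x)) \<in> im_rho dm cd Xob pt Xmor"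
proof -
  obtain w where w: "w \<in> smash (limX dm cd Xob Xmor) pt" "z = rho pt w"
    using assms(1) by (auto simp: im_rho_def smashL_def)
  have "(\<lambda>d x. h (z d x)) = rho pt (\<lambda>s. h (w s))" using rho_hom[OF smash_fin[OF w(1)] assms(2)] w(2) by simp
  then show ?thesis using smash_hom[OF w(1) assms(2)] by (auto simp: im_rho_def smashL_def)
qed

lemma im_add: assumes "z1 \<in> im_rho dm cd Xob pt Xmor" "z2 \<in> im_rho dm cd Xob pt Xmor" shows
   "(\<lambda>d x. z1 d x + z2 d x) \<in> im_rho dm cd Xob pt Xmor"
proof -
  obtain w1 where w1: "w1 \<in> smash (limX dm cd Xob Xmor) pt" "z1 = rho pt w1"
    using assms(1) by (auto simp: im_rho_def smashL_def)
  obtain w2 where w2: "w2 \<in> smash (limX dm cd Xob Xmor) pt" "z2 = rho pt w2"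
    using assms(2) by (auto simp: im_rho_def smashL_def)
  have "(\<lambda>d x. z1 d x + z2 d x) = rho pt (\<lambda>s. w1 s + w2 s)"
    using rho_add[OF smash_fin[OF w1(1)] smash_fin[OF w2(1)]] w1(2) w2(2) by simp
  then show ?thesis using smash_add[OF w1(1) w2(1)] by (auto simp: im_rho_def smashL_def)
qed

lemma im_sub: "im_rho dm cd Xob pt Xmor \<subseteq> limXA dm cd Xob pt Xmor"
  unfolding im_rho_def using rho_in by auto

end



lemma natmult_fun2: "natmult n (z :: 'b \<Rightarrow> 'c \<Rightarrow> 'a::ab_group_add) = (\<lambda>d x. natmult n (z d x))"
  by (simp add: natmult_fun)

lemma addh_natmult_comm: "addh h \<Longrightarrow> natmult n (h a) = h (natmult n a)"
  by (induction n) (auto simp: addh_0 addh_def)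

lemma addh_uminus: "addh (uminus :: 'a::ab_group_add \<Rightarrow> 'a)"
  by (simp add: addh_def)

lemma addh_zero: "addh (\<lambda>_. 0 :: 'a::ab_group_add)"
  by (simp add: addh_def)

lemma natmult_diff: "natmult n (a - b) = natmult n a - natmult n (b::'a::ab_group_add)"
  using addh_diff[OF addh_natmult] by blast

context setting begin

lemma zero_smashL: "(\<lambda>s. 0) \<in> smashL dm cd Xob pt Xmor"
  by (simp add: smashL_def smash_def)

lemma zero_ker: "(0 :: ('d \<Rightarrow> 'x) \<Rightarrow> 'a::ab_group_add) \<in> ker_rho dm cd Xob pt Xmor"
  using zero_smashL by (simp add: ker_rho_def rho_def push_def fun_eq_iff zero_fun_def)

lemma zero_im: "(0 :: 'd \<Rightarrow> 'x \<Rightarrow> 'a::ab_group_add) \<in> im_rho dm cd Xob pt Xmor"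
proof -
  have "rho pt (\<lambda>s. 0::'a) = 0" by (simp add: rho_def push_def fun_eq_iff)
  then show ?thesis using zero_smashL unfolding im_rho_def by (metis image_eqI)
qed

lemma zero_im': "(\<lambda>d x. 0 :: 'a::ab_group_add) \<in> im_rho dm cd Xob pt Xmor"
  using zero_im by (simp add: zero_fun_def)

lemma zero_LA: "(0 :: 'd \<Rightarrow> 'x \<Rightarrow> 'a::ab_group_add) \<in> limXA dm cd Xob pt Xmor"
  using zero_im im_sub by blast

end

locale decomp = setting dm cd idm cmp Xob pt Xmor
  for dm cd :: "'m \<Rightarrow> 'd" and idm :: "'d \<Rightarrow> 'm" and cmp :: "'m \<Rightarrow> 'm \<Rightarrow> 'm"
    and Xob :: "'d \<Rightarrow> 'x set" and pt :: "'d \<Rightarrow> 'x" and Xmor :: "'m \<Rightarrow> 'x \<Rightarrow> 'x" +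
  fixes U B :: "'a::ab_group_add set" and pU pB :: "'a \<Rightarrow> 'a"
  assumes hU: "addh pU" and hB: "addh pB" and sumP: "\<And>a. pU a + pB a = a"
    and inU: "\<And>a. pU a \<in> U" and inB: "\<And>a. pB a \<in> B" and idU: "\<And>u. u \<in> U \<Longrightarrow> pU u = u"
    and killB: "\<And>b. b \<in> B \<Longrightarrow> pU b = 0"
    and sU: "is_subgroup U" and sB: "is_subgroup B" and ud: "sq_uniquely_divisible U {0}"
    and bd: "sq_bounded B {0}"
begin

abbreviation "KK \<equiv> (ker_rho dm cd Xob pt Xmor :: (('d \<Rightarrow> 'x) \<Rightarrow> 'a) set)"
abbreviation "IM \<equiv> (im_rho dm cd Xob pt Xmor :: ('d \<Rightarrow> 'x \<Rightarrow> 'a) set)"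
abbreviation "LA \<equiv> (limXA dm cd Xob pt Xmor :: ('d \<Rightarrow> 'x \<Rightarrow> 'a) set)"

lemma killU: "u \<in> U \<Longrightarrow> pB u = 0"
  using sumP[of u] idU[of u] by simp

lemma cancelU: "n > 0 \<Longrightarrow> u1 \<in> U \<Longrightarrow> u2 \<in> U \<Longrightarrow> natmult n u1 = natmult n u2 \<Longrightarrow> u1 = u2"
proof -
  assume a: "n > 0" "u1 \<in> U" "u2 \<in> U" "natmult n u1 = natmult n u2"
  have "u1 - u2 \<in> U" using sU a(2,3) unfolding is_subgroup_def by (metis diff_conv_add_uminus)
  moreover have "natmult n (u1 - u2) = 0" using a(4) by (simp add: natmult_diff)
  ultimately have "u1 - u2 \<in> {0}" using ud a(1) unfolding sq_uniquely_divisible_def by blast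
  then show ?thesis by simp
qed

lemma delta_ex: assumes "n > 0"
  shows "\<exists>\<delta>. addh \<delta> \<and> (\<forall>a. natmult n (\<delta> a) = pU a) \<and> (\<forall>a. \<delta> a \<in> U)"
proof -
  have ex: "\<exists>u\<in>U. natmult n u = pU a" for a
    using ud assms inU[of a] unfolding sq_uniquely_divisible_def by fastforce
  define \<delta> where "\<delta> a = (SOME u. u \<in> U \<and> natmult n u = pU a)" for a
  have d: "\<delta> a \<in> U \<and> natmult n (\<delta> a) = pU a" for a
    unfolding \<delta>_def using someI_ex[OF ex[of a, unfolded Bex_def]] .
  have "addh \<delta>" unfolding addh_def
  proof (intro allI)
    fix a b
    have "\<delta> a + \<delta> b \<in> U" using d sU unfolding is_subgroup_def by blast
    moreover have "natmult n (\<delta> a + \<delta> b) = natmult n (\<delta> (a + b))"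
      using d natmult_add hU unfolding addh_def by metis
    ultimately show "\<delta> (a + b) = \<delta> a + \<delta> b" using cancelU[OF assms] d by metis
  qed
  then show ?thesis using d by blast
qed

definition "KU = {w \<in> KK. \<forall>s. w s \<in> U}"
definition "KB = {w \<in> KK. \<forall>s. w s \<in> B}"
definition "CU = {z \<in> LA. (\<lambda>d x. pB (z d x)) \<in> IM}"
definition "CB = {z \<in> LA. (\<lambda>d x. pU (z d x)) \<in> IM}"

lemma ud_KU: "sq_uniquely_divisible KU {0}"
  unfolding sq_uniquely_divisible_def
proof (intro allI impI conjI ballI)
  fix n :: nat assume n: "n > 0"
  obtain \<delta> where d: "addh \<delta>" "\<And>a. natmult n (\<delta> a) = pU a" "\<And>a. \<delta> a \<in> U"
    using delta_ex[OF n] by blast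
  {
    fix s assume s: "s \<in> KU"
    have "(\<lambda>t. \<delta> (s t)) \<in> KU" using s ker_hom[OF _ d(1)] d(3) by (auto simp: KU_def)
    moreover have "natmult n (\<lambda>t. \<delta> (s t)) - s \<in> {0}"
      using s d(2) idU by (auto simp: KU_def natmult_fun fun_eq_iff)
    ultimately show "\<exists>s'\<in>KU. natmult n s' - s \<in> {0}" by blast
  }
  {
    fix s' assume s': "s' \<in> KU" "natmult n s' \<in> {0}"
    have "s' t = 0" for t
      using cancelU[OF n, of "s' t" 0] s' sU
      by (auto simp: KU_def natmult_fun fun_eq_iff natmult_zero is_subgroup_def)
    then show "s' \<in> {0}" by (auto simp: fun_eq_iff)
  }
qed


lemma bd_KB: "sq_bounded KB {0}"
proof -
  obtain m where m: "m > 0" "\<And>b. b \<in> B \<Longrightarrow> natmult m b = 0"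
    using bd unfolding sq_bounded_def sq_bounded_by_def by auto
  have "natmult m w \<in> {0}" if "w \<in> KB" for w
    using that m(2) by (auto simp: KB_def natmult_fun fun_eq_iff)
  then show ?thesis using m(1) unfolding sq_bounded_def sq_bounded_by_def by blast
qed

lemma ker_sub: "is_subgroup KK"
  unfolding is_subgroup_def
proof (intro conjI ballI)
  show "0 \<in> KK" by (rule zero_ker)
  fix a b :: "('d \<Rightarrow> 'x) \<Rightarrow> 'a" assume "a \<in> KK" "b \<in> KK"
  then show "a + b \<in> KK" using ker_add by (simp add: plus_fun_def)
next
  fix a :: "('d \<Rightarrow> 'x) \<Rightarrow> 'a" assume "a \<in> KK"
  then show "- a \<in> KK" using ker_hom[OF _ addh_uminus] by (simp add: fun_Compl_def)
qed

lemma KU_sub: "is_subgroup KU" and KB_sub: "is_subgroup KB"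
  using ker_sub sU sB unfolding is_subgroup_def KU_def KB_def by auto

lemma K_decomp: "KK = {u + b | u b. u \<in> KU \<and> b \<in> KB}"
proof
  show "KK \<subseteq> {u + b | u b. u \<in> KU \<and> b \<in> KB}"
  proof
    fix w assume w: "w \<in> KK"
    have "(\<lambda>s. pU (w s)) \<in> KU" using ker_hom[OF w hU] inU by (auto simp: KU_def)
    moreover have "(\<lambda>s. pB (w s)) \<in> KB" using ker_hom[OF w hB] inB by (auto simp: KB_def)
    moreover have "w = (\<lambda>s. pU (w s)) + (\<lambda>s. pB (w s))" using sumP by (simp add: fun_eq_iff)
    ultimately show "w \<in> {u + b | u b. u \<in> KU \<and> b \<in> KB}" by blast
  qed
next
  show "{u + b | u b. u \<in> KU \<and> b \<in> KB} \<subseteq> KK"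
    using ker_sub unfolding KU_def KB_def is_subgroup_def by auto
qed

lemma K_inter: "KU \<inter> KB = {0}"
proof
  show "KU \<inter> KB \<subseteq> {0}"
  proof
    fix w assume "w \<in> KU \<inter> KB"
    then have "w s = 0" for s using idU[of "w s"] killB[of "w s"] by (auto simp: KU_def KB_def)
    then show "w \<in> {0}" by (auto simp: fun_eq_iff)
  qed
  show "{0} \<subseteq> KU \<inter> KB" using zero_ker sU sB by (auto simp: KU_def KB_def is_subgroup_def)
qed

lemma KU_K: "KU \<subseteq> KK" and KB_K: "KB \<subseteq> KK" unfolding KU_def KB_def by auto

lemma Z0: "{0} \<subseteq> KU" "{0} \<subseteq> KB" using K_inter by auto

lemma K_almost: "sq_almost_uniquely_divisible KK {0}"
  unfolding sq_almost_uniquely_divisible_def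
  apply (rule exI[of _ KU], rule exI[of _ KB])
  using KU_sub KB_sub K_inter K_decomp ud_KU bd_KB KU_K KB_K Z0
  by (intro conjI) assumption+

lemma IM_sub: "is_subgroup IM"
  unfolding is_subgroup_def
proof (intro conjI ballI)
  show "0 \<in> IM" by (rule zero_im)
  fix a b :: "'d \<Rightarrow> 'x \<Rightarrow> 'a" assume "a \<in> IM" "b \<in> IM"
  then show "a + b \<in> IM" using im_add by (simp add: plus_fun_def)
next
  fix a :: "'d \<Rightarrow> 'x \<Rightarrow> 'a" assume "a \<in> IM"
  then show "- a \<in> IM" using im_hom[OF _ addh_uminus] by (simp add: fun_Compl_def)
qed

lemma LA_sub: "is_subgroup LA"
  unfolding is_subgroup_def
proof (intro conjI ballI)
  show "0 \<in> LA" by (rule zero_LA)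
  fix a b :: "'d \<Rightarrow> 'x \<Rightarrow> 'a" assume "a \<in> LA" "b \<in> LA"
  then show "a + b \<in> LA" using limXA_add by (simp add: plus_fun_def)
next
  fix a :: "'d \<Rightarrow> 'x \<Rightarrow> 'a" assume "a \<in> LA"
  then show "- a \<in> LA" using limXA_hom[OF _ addh_uminus] by (simp add: fun_Compl_def)
qed

lemma C_sub_gen:
  assumes h: "addh h"
  shows "is_subgroup {z \<in> LA. (\<lambda>d x. h (z d x)) \<in> IM}"
  unfolding is_subgroup_def
proof (intro conjI ballI)
  show "0 \<in> {z \<in> LA. (\<lambda>d x. h (z d x)) \<in> IM}"
    using zero_LA zero_im' addh_0[OF h] by simp
  fix a b :: "'d \<Rightarrow> 'x \<Rightarrow> 'a"
  assume a: "a \<in> {z \<in> LA. (\<lambda>d x. h (z d x)) \<in> IM}"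
     and b: "b \<in> {z \<in> LA. (\<lambda>d x. h (z d x)) \<in> IM}"
  have "(\<lambda>d x. h (a d x) + h (b d x)) \<in> IM" by (rule im_add) (use a b in auto)
  then show "a + b \<in> {z \<in> LA. (\<lambda>d x. h (z d x)) \<in> IM}"
  proof -
    have "(\<lambda>d x. a d x + b d x) \<in> LA" by (rule limXA_add) (use a b in auto)
    then show ?thesis using \<open>(\<lambda>d x. h (a d x) + h (b d x)) \<in> IM\<close> h by (simp add: plus_fun_def addh_def)
  qed
next
  fix a :: "'d \<Rightarrow> 'x \<Rightarrow> 'a"
  assume a: "a \<in> {z \<in> LA. (\<lambda>d x. h (z d x)) \<in> IM}"
  have "(\<lambda>d x. - h (a d x)) \<in> IM" using a im_hom[OF _ addh_uminus] by force
  then show "- a \<in> {z \<in> LA. (\<lambda>d x. h (z d x)) \<in> IM}"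
  proof -
    have "(\<lambda>d x. - a d x) \<in> LA" using limXA_hom[OF _ addh_uminus, of a] a by auto
    then show ?thesis using \<open>(\<lambda>d x. - h (a d x)) \<in> IM\<close> h by (simp add: fun_Compl_def addh_minus)
  qed
qed

lemma CU_sub: "is_subgroup CU" and CB_sub: "is_subgroup CB"
  unfolding CU_def CB_def using C_sub_gen[OF hB] C_sub_gen[OF hU] by auto

lemma IM_CU: "IM \<subseteq> CU" and IM_CB: "IM \<subseteq> CB"
  unfolding CU_def CB_def using im_sub im_hom hU hB by auto

lemma C_split: "z = (\<lambda>d x. pU (z d x)) + (\<lambda>d x. pB (z d x))"
  using sumP by (simp add: fun_eq_iff)

lemma C_inter: "CU \<inter> CB = IM"
proof
  show "CU \<inter> CB \<subseteq> IM"
  proof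
    fix z assume "z \<in> CU \<inter> CB"
    then have "(\<lambda>d x. pU (z d x) + pB (z d x)) \<in> IM"
      using im_add by (auto simp: CU_def CB_def)
    then show "z \<in> IM" using sumP by simp
  qed
  show "IM \<subseteq> CU \<inter> CB" using IM_CU IM_CB by auto
qed

lemma C_decomp: "LA = {u + b | u b. u \<in> CU \<and> b \<in> CB}"
proof
  show "LA \<subseteq> {u + b | u b. u \<in> CU \<and> b \<in> CB}"
  proof
    fix z assume z: "z \<in> LA"
    have "(\<lambda>d x. pU (z d x)) \<in> CU"
      using limXA_hom[OF z hU] killU[OF inU] zero_im' by (simp add: CU_def)
    moreover have "(\<lambda>d x. pB (z d x)) \<in> CB"
      using limXA_hom[OF z hB] killB[OF inB] zero_im' by (simp add: CB_def)
    ultimately show "z \<in> {u + b | u b. u \<in> CU \<and> b \<in> CB}" using C_split[of z] by blast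
  qed
next
  show "{u + b | u b. u \<in> CU \<and> b \<in> CB} \<subseteq> LA"
    using LA_sub unfolding CU_def CB_def is_subgroup_def by auto
qed

lemma ud_CU: "sq_uniquely_divisible CU (IM)"
  unfolding sq_uniquely_divisible_def
proof (intro allI impI conjI ballI)
  fix n :: nat assume n: "n > 0"
  obtain \<delta> where d: "addh \<delta>" "\<And>a. natmult n (\<delta> a) = pU a" "\<And>a. \<delta> a \<in> U"
    using delta_ex[OF n] by blast
  {
    fix z assume z: "z \<in> CU"
    have zL: "z \<in> LA" and zB: "(\<lambda>d x. pB (z d x)) \<in> IM"
      using z by (auto simp: CU_def)
    have "(\<lambda>d x. \<delta> (z d x)) \<in> CU"
      using limXA_hom[OF zL d(1)] killU[OF d(3)] zero_im' by (simp add: CU_def)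
    moreover have "natmult n (\<lambda>d x. \<delta> (z d x)) - z = (\<lambda>d x. - pB (z d x))"
      using d(2) sumP by (simp add: natmult_fun fun_eq_iff algebra_simps)
    moreover have "(\<lambda>d x. - pB (z d x)) \<in> IM"
      using im_hom[OF zB addh_uminus] by simp
    ultimately show "\<exists>s'\<in>CU. natmult n s' - z \<in> IM" by metis
  }
  {
    fix z assume z: "z \<in> CU" "natmult n z \<in> IM"
    have zB: "(\<lambda>d x. pB (z d x)) \<in> IM" using z by (auto simp: CU_def)
    obtain w where w: "w \<in> smash (limX dm cd Xob Xmor) pt" "natmult n z = rho pt w"
      using z(2) by (auto simp: im_rho_def smashL_def)
    have w2: "natmult n (z d x) = rho pt w d x" for d x using w(2) by (simp add: natmult_fun fun_eq_iff)
    have "rho pt (\<lambda>s. \<delta> (w s)) = (\<lambda>d x. \<delta> (rho pt w d x))" by (rule rho_hom[OF smash_fin[OF w(1)] d(1)])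
    also have "\<dots> = (\<lambda>d x. pU (z d x))"
    proof (intro ext)
      fix d x
      have "natmult n (\<delta> (rho pt w d x)) = natmult n (pU (z d x))"
        using d(2) w2 addh_natmult_comm[OF hU] by metis
      then show "\<delta> (rho pt w d x) = pU (z d x)" using cancelU[OF n] d(3) inU by blast
    qed
    finally have "(\<lambda>d x. pU (z d x)) \<in> IM"
      using smash_hom[OF w(1) d(1)] unfolding im_rho_def smashL_def by (metis image_eqI)
    then have "(\<lambda>d x. pU (z d x) + pB (z d x)) \<in> IM" using zB im_add by blast
    then show "z \<in> IM" using sumP by simp
  }
qed

lemma bd_CB: "sq_bounded CB (IM)"
proof -
  obtain m where m: "m > 0" "\<And>b. b \<in> B \<Longrightarrow> natmult m b = 0"
    using bd unfolding sq_bounded_def sq_bounded_by_def by auto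
  have "natmult m z \<in> IM" if "z \<in> CB" for z
  proof -
    have zU: "(\<lambda>d x. pU (z d x)) \<in> IM" using that by (auto simp: CB_def)
    have e: "natmult m a = natmult m (pU a)" for a
      using natmult_add[of m "pU a" "pB a"] sumP[of a] m(2)[OF inB] by simp
    have "natmult m z = (\<lambda>d x. natmult m (pU (z d x)))"
      using e by (simp add: natmult_fun fun_eq_iff)
    then show ?thesis using im_hom[OF zU addh_natmult] by simp
  qed
  then show ?thesis using m(1) unfolding sq_bounded_def sq_bounded_by_def by blast
qed

lemma CU_LA: "CU \<subseteq> LA" and CB_LA: "CB \<subseteq> LA" unfolding CU_def CB_def by auto

lemma C_almost: "sq_almost_uniquely_divisible LA (IM)"
  unfolding sq_almost_uniquely_divisible_def
  apply (rule exI[of _ CU], rule exI[of _ CB])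
  using CU_sub CB_sub C_inter C_decomp ud_CU bd_CB IM_CU IM_CB CU_LA CB_LA
  by (intro conjI) assumption+

end



lemma sg_diff: "is_subgroup S \<Longrightarrow> a \<in> S \<Longrightarrow> b \<in> S \<Longrightarrow> a - b \<in> S"
  unfolding is_subgroup_def by (metis diff_conv_add_uminus)

lemma proj_ex:
  fixes U B :: "'a::ab_group_add set"
  assumes sU: "is_subgroup U" and sB: "is_subgroup B" and i: "U \<inter> B = {0}"
    and s: "(UNIV::'a set) = {u + b | u b. u \<in> U \<and> b \<in> B}"
  shows "\<exists>pU pB. addh pU \<and> addh pB \<and> (\<forall>a. pU a + pB a = a) \<and> (\<forall>a. pU a \<in> U) \<and> (\<forall>a. pB a \<in> B)
     \<and> (\<forall>u\<in>U. pU u = u) \<and> (\<forall>b\<in>B. pU b = 0)"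
proof -
  have uniq: "u1 = u2" if "u1 \<in> U" "u2 \<in> U" "a - u1 \<in> B" "a - u2 \<in> B" for a u1 u2
  proof -
    have "u1 - u2 \<in> U" using sg_diff[OF sU] that by blast
    moreover have "u1 - u2 = (a - u2) - (a - u1)" by simp
    then have "u1 - u2 \<in> B" using sg_diff[OF sB] that by metis
    ultimately have "u1 - u2 \<in> U \<inter> B" by blast
    then have "u1 - u2 = 0" using i by blast
    then show ?thesis by simp
  qed
  have ex1: "\<exists>!u. u \<in> U \<and> a - u \<in> B" for a
  proof -
    obtain u b where "a = u + b" "u \<in> U" "b \<in> B" using s by blast
    then have "u \<in> U \<and> a - u \<in> B" by simp
    then show ?thesis using uniq by blast
  qed
  define pU where "pU a = (THE u. u \<in> U \<and> a - u \<in> B)" for a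
  have p: "pU a \<in> U \<and> a - pU a \<in> B" for a unfolding pU_def by (rule theI'[OF ex1])
  have pe: "pU a = u" if "u \<in> U" "a - u \<in> B" for a u using uniq p that by blast
  have hU: "addh pU" unfolding addh_def
  proof (intro allI)
    fix a b
    have "pU a + pU b \<in> U" using p sU unfolding is_subgroup_def by blast
    moreover have "(a + b) - (pU a + pU b) = (a - pU a) + (b - pU b)" by simp
    then have "(a + b) - (pU a + pU b) \<in> B" using p sB unfolding is_subgroup_def by metis
    ultimately show "pU (a + b) = pU a + pU b" by (rule pe)
  qed
  define pB where "pB a = a - pU a" for a
  have hB: "addh pB" using hU unfolding addh_def pB_def by (simp add: algebra_simps)
  have "\<forall>u\<in>U. pU u = u" using pe sB unfolding is_subgroup_def by auto
  moreover have "\<forall>b\<in>B. pU b = 0" using pe sU unfolding is_subgroup_def by auto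
  moreover have "\<forall>a. pU a + pB a = a" by (simp add: pB_def)
  ultimately show ?thesis using hU hB p unfolding pB_def[symmetric] by blast
qed

theorem mainTheorem6:
  fixes dm cd :: "'m \<Rightarrow> 'd" and idm :: "'d \<Rightarrow> 'm" and cmp :: "'m \<Rightarrow> 'm \<Rightarrow> 'm"
    and Xob :: "'d \<Rightarrow> 'x set" and pt :: "'d \<Rightarrow> 'x" and Xmor :: "'m \<Rightarrow> 'x \<Rightarrow> 'x"
  assumes cat: "is_category dm cd idm cmp"
    and diag: "is_pointed_diagram dm cd idm cmp Xob pt Xmor"
  shows
    "(\<forall>m. (\<forall>a::'a::ab_group_add. natmult m a = 0) \<longrightarrow>
        sq_bounded_by m (ker_rho dm cd Xob pt Xmor :: (('d \<Rightarrow> 'x) \<Rightarrow> 'a) set) {0} \<and>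
        sq_bounded_by m (limXA dm cd Xob pt Xmor :: ('d \<Rightarrow> 'x \<Rightarrow> 'a) set) (im_rho dm cd Xob pt Xmor))
     \<and>
     (sq_uniquely_divisible (UNIV :: 'a set) {0} \<longrightarrow>
        sq_uniquely_divisible (ker_rho dm cd Xob pt Xmor :: (('d \<Rightarrow> 'x) \<Rightarrow> 'a) set) {0} \<and>
        sq_uniquely_divisible (limXA dm cd Xob pt Xmor :: ('d \<Rightarrow> 'x \<Rightarrow> 'a) set) (im_rho dm cd Xob pt Xmor))
     \<and>
     (sq_almost_uniquely_divisible (UNIV :: 'a set) {0} \<longrightarrow>
        sq_almost_uniquely_divisible (ker_rho dm cd Xob pt Xmor :: (('d \<Rightarrow> 'x) \<Rightarrow> 'a) set) {0} \<and>
        sq_almost_uniquely_divisible (limXA dm cd Xob pt Xmor :: ('d \<Rightarrow> 'x \<Rightarrow> 'a) set) (im_rho dm cd Xob pt Xmor))"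
proof (intro conjI allI impI)
  interpret setting dm cd idm cmp Xob pt Xmor by (rule setting.intro[OF diag])
  fix m assume m: "\<forall>a::'a. natmult m a = 0"
  show "sq_bounded_by m (ker_rho dm cd Xob pt Xmor :: (('d \<Rightarrow> 'x) \<Rightarrow> 'a) set) {0}"
    using m by (simp add: sq_bounded_by_def natmult_fun zero_fun_def)
  show "sq_bounded_by m (limXA dm cd Xob pt Xmor :: ('d \<Rightarrow> 'x \<Rightarrow> 'a) set) (im_rho dm cd Xob pt Xmor)"
  proof -
    have z: "(\<lambda>d x. 0::'a) \<in> im_rho dm cd Xob pt Xmor" by (rule zero_im')
    show ?thesis using m z by (simp add: sq_bounded_by_def natmult_fun)
  qed
next
  assume ud: "sq_uniquely_divisible (UNIV :: 'a set) {0}"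
  interpret d: decomp dm cd idm cmp Xob pt Xmor "UNIV :: 'a set" "{0}" "\<lambda>a. a" "\<lambda>_. 0"
  proof (unfold_locales)
    show "is_pointed_diagram dm cd idm cmp Xob pt Xmor" by (rule diag)
    show "addh (\<lambda>a::'a. a)" by (simp add: addh_def)
    show "addh (\<lambda>_::'a. 0::'a)" by (simp add: addh_def)
    show "is_subgroup (UNIV :: 'a set)" by (simp add: is_subgroup_def)
    show "is_subgroup {0::'a}" by (simp add: is_subgroup_def)
    show "sq_uniquely_divisible (UNIV :: 'a set) {0}" by (rule ud)
    show "sq_bounded {0::'a} {0}" unfolding sq_bounded_def sq_bounded_by_def
      by (rule exI[of _ 1]) simp
  qed auto
  have "d.KU = ker_rho dm cd Xob pt Xmor" by (simp add: d.KU_def)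
  then show "sq_uniquely_divisible (ker_rho dm cd Xob pt Xmor :: (('d \<Rightarrow> 'x) \<Rightarrow> 'a) set) {0}"
    using d.ud_KU by simp
  have z: "(\<lambda>d x. 0::'a) \<in> im_rho dm cd Xob pt Xmor" by (rule d.zero_im')
  have "d.CU = limXA dm cd Xob pt Xmor" using z by (simp add: d.CU_def)
  then show "sq_uniquely_divisible (limXA dm cd Xob pt Xmor :: ('d \<Rightarrow> 'x \<Rightarrow> 'a) set) (im_rho dm cd Xob pt Xmor)"
    using d.ud_CU by simp
next
  assume au: "sq_almost_uniquely_divisible (UNIV :: 'a set) {0}"
  then obtain U B :: "'a set" where UB: "is_subgroup U" "is_subgroup B" "U \<inter> B = {0}"
    "UNIV = {u + b | u b. u \<in> U \<and> b \<in> B}" "sq_uniquely_divisible U {0}" "sq_bounded B {0}"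
    unfolding sq_almost_uniquely_divisible_def by blast
  obtain pU pB where P: "addh pU" "addh pB" "\<forall>a. pU a + pB a = a" "\<forall>a. pU a \<in> U" "\<forall>a. pB a \<in> B"
     "\<forall>u\<in>U. pU u = u" "\<forall>b\<in>B. pU b = 0"
    using proj_ex[OF UB(1-4)] by blast
  interpret d: decomp dm cd idm cmp Xob pt Xmor U B pU pB
    by (unfold_locales) (use diag P UB in auto)
  show "sq_almost_uniquely_divisible (ker_rho dm cd Xob pt Xmor :: (('d \<Rightarrow> 'x) \<Rightarrow> 'a) set) {0}"
    by (rule d.K_almost)
  show "sq_almost_uniquely_divisible (limXA dm cd Xob pt Xmor :: ('d \<Rightarrow> 'x \<Rightarrow> 'a) set) (im_rho dm cd Xob pt Xmor)"
    by (rule d.C_almost)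
qed

end
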